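(* Let $\Delta$ be a finite set with $|\Delta|\ge2$, $\ell\ge2$, $\Omega=\Delta^\ell$, $W=\mathrm{Sym}\,\Delta\wr S_\ell$ in product action on $\Omega$, $G\le W$, and let $M$ be a minimal normal subgroup of $G$ transitive on $\Omega$, $M=T_1\times\cdots\times T_k$ with the $T_i$ isomorphic finite simple groups. Let $\Gamma$ be a connected graph with vertex set $\Omega$ with $G\le\mathrm{Aut}\,\Gamma$. Suppose $\Gamma$ is $M$-arc-transitive and the inclusion $G\le W$ is normal. Then $\Gamma\cong(\Gamma_1)^\ell$, where $\Gamma_1$ is the graph with vertex set $\Delta$ whose edge set is the $M^{(1)}$-orbit of $\{\alpha_1,\beta_1\}$, with $\alpha_1,\beta_1\in\Delta$ chosen so that $(\alpha_1,\dots,\alpha_1)$ and $(\beta_1,\beta_2,\dots,\beta_\ell)$ are adjacent in $\Gamma$ for some $\beta_2,\dots,\beta_\ell\in\Delta$. In particular, $\Gamma$ is not $(G,2)$-arc-transitive.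
   Context: Product action: $(\delta_1,\dots,\delta_\ell)^{(g_1,\dots,g_\ell)h}=(\delta_{1h^{-1}}g_{1h^{-1}},\dots,\delta_{\ell h^{-1}}g_{\ell h^{-1}})$. Let $\pi:W\to S_\ell$ be the natural projection, $W_j$ the stabiliser of $j$ under $\pi$, $W_j=\mathrm{Sym}\,\Delta\times(\mathrm{Sym}\,\Delta\wr S_{\ell-1})$ with the first factor on the $j$-th coordinate; the component $H^{(j)}$ of $H\le W$ is the projection of $H\cap W_j$ onto the first factor. When $M$ is non-abelian, $M^{(j)}$ is identified with the product of those $T_i$ not in the kernel of $M\to M^{(j)}$; the inclusion $G\le W$ is normal if $M$ is non-abelian and each $T_i$ lies in exactly one $M^{(j)}$ (equivalently $M=\prod_jM^{(j)}$). The direct product $(\Gamma_1)^\ell$ has vertex set $V(\Gamma_1)^\ell$, with $(\gamma_1,\dots,\gamma_\ell)$ adjacent to $(\gamma'_1,\dots,\gamma'_\ell)$ iff $\gamma_i$ is adjacent to $\gamma'_i$ in $\Gamma_1$ for all $i$. $\Gamma$ is $M$-arc-transitive if $M$ is transitive on ordered pairs of adjacent vertices; it is $(G,2)$-arc-transitive if $G$ is transitive on $2$-arcs, i.e. sequences $(v_0,v_1,v_2)$ with $v_0\sim v_1\sim v_2$ and $v_0\ne v_2$. *)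

theory Defs
  imports "HOL-Algebra.Algebra"
begin

text \<open>Omega = Delta^l, realised as extensional functions on the index set {..<l}
  (coordinates are numbered 0, ..., l-1 instead of 1, ..., l).\<close>
definition Omega :: "nat \<Rightarrow> 'a set \<Rightarrow> (nat \<Rightarrow> 'a) set" where
  "Omega l D = PiE {..<l} (\<lambda>_. D)"

text \<open>sigma is the element (g_0,...,g_{l-1}) h of Sym D wr S_l in product action:
  coordinate h j of the image of delta is g_j (delta_j).\<close>
definition wr_elem :: "nat \<Rightarrow> 'a set \<Rightarrow> (nat \<Rightarrow> nat) \<Rightarrow> (nat \<Rightarrow> 'a \<Rightarrow> 'a)
    \<Rightarrow> ((nat \<Rightarrow> 'a) \<Rightarrow> (nat \<Rightarrow> 'a)) \<Rightarrow> bool" where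
  "wr_elem l D h g \<sigma> \<longleftrightarrow> bij_betw h {..<l} {..<l}
     \<and> (\<forall>j<l. bij_betw (g j) D D)
     \<and> \<sigma> \<in> Bij (Omega l D)
     \<and> (\<forall>\<delta>\<in>Omega l D. \<forall>j<l. \<sigma> \<delta> (h j) = g j (\<delta> j))"

definition Wr :: "nat \<Rightarrow> 'a set \<Rightarrow> ((nat \<Rightarrow> 'a) \<Rightarrow> (nat \<Rightarrow> 'a)) set" where
  "Wr l D = {\<sigma>. \<exists>h g. wr_elem l D h g \<sigma>}"

text \<open>The component H^(j): projection of H \<inter> W_j onto the j-th factor Sym D.\<close>
definition component :: "nat \<Rightarrow> 'a set \<Rightarrow> ((nat \<Rightarrow> 'a) \<Rightarrow> (nat \<Rightarrow> 'a)) set \<Rightarrow> nat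
    \<Rightarrow> ('a \<Rightarrow> 'a) set" where
  "component l D H j = {restrict (g j) D | \<sigma> h g. \<sigma> \<in> H \<and> wr_elem l D h g \<sigma> \<and> h j = j}"

definition normal_inclusion :: "nat \<Rightarrow> 'a set \<Rightarrow> ((nat \<Rightarrow> 'a) \<Rightarrow> (nat \<Rightarrow> 'a)) set \<Rightarrow> bool" where
  "normal_inclusion l D M \<longleftrightarrow>
     (\<exists>a\<in>M. \<exists>b\<in>M. compose (Omega l D) a b \<noteq> compose (Omega l D) b a)
     \<and> M = {\<sigma>. \<exists>g. wr_elem l D id g \<sigma> \<and> (\<forall>j<l. restrict (g j) D \<in> component l D M j)}"

definition minimal_normal :: "'b set \<Rightarrow> ('b \<Rightarrow> 'b) set \<Rightarrow> ('b \<Rightarrow> 'b) set \<Rightarrow> bool" where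
  "minimal_normal S G M \<longleftrightarrow>
     M \<lhd> (BijGroup S)\<lparr>carrier := G\<rparr> \<and> M \<noteq> {\<lambda>x\<in>S. x}
     \<and> (\<forall>N. N \<lhd> (BijGroup S)\<lparr>carrier := G\<rparr> \<and> N \<subseteq> M \<longrightarrow> N = {\<lambda>x\<in>S. x} \<or> N = M)"

definition transitive_on :: "'b set \<Rightarrow> ('b \<Rightarrow> 'b) set \<Rightarrow> bool" where
  "transitive_on S H \<longleftrightarrow> (\<forall>x\<in>S. \<forall>y\<in>S. \<exists>m\<in>H. m x = y)"

definition graph :: "'b set \<Rightarrow> ('b \<Rightarrow> 'b \<Rightarrow> bool) \<Rightarrow> bool" where
  "graph V E \<longleftrightarrow> (\<forall>x y. E x y \<longrightarrow> x \<in> V \<and> y \<in> V \<and> x \<noteq> y \<and> E y x)"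

definition connected_graph :: "'b set \<Rightarrow> ('b \<Rightarrow> 'b \<Rightarrow> bool) \<Rightarrow> bool" where
  "connected_graph V E \<longleftrightarrow> (\<forall>x\<in>V. \<forall>y\<in>V. E\<^sup>*\<^sup>* x y)"

definition automorphisms_of :: "'b set \<Rightarrow> ('b \<Rightarrow> 'b \<Rightarrow> bool) \<Rightarrow> ('b \<Rightarrow> 'b) set" where
  "automorphisms_of V E = {\<sigma> \<in> Bij V. \<forall>x\<in>V. \<forall>y\<in>V. E (\<sigma> x) (\<sigma> y) \<longleftrightarrow> E x y}"

definition arc_transitive :: "('b \<Rightarrow> 'b) set \<Rightarrow> ('b \<Rightarrow> 'b \<Rightarrow> bool) \<Rightarrow> bool" where
  "arc_transitive H E \<longleftrightarrow>
     (\<forall>x y x' y'. E x y \<and> E x' y' \<longrightarrow> (\<exists>m\<in>H. m x = x' \<and> m y = y'))"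

definition two_arc_transitive :: "('b \<Rightarrow> 'b) set \<Rightarrow> ('b \<Rightarrow> 'b \<Rightarrow> bool) \<Rightarrow> bool" where
  "two_arc_transitive H E \<longleftrightarrow>
     (\<forall>v0 v1 v2 w0 w1 w2. E v0 v1 \<and> E v1 v2 \<and> v0 \<noteq> v2 \<and> E w0 w1 \<and> E w1 w2 \<and> w0 \<noteq> w2
        \<longrightarrow> (\<exists>m\<in>H. m v0 = w0 \<and> m v1 = w1 \<and> m v2 = w2))"

definition direct_power :: "nat \<Rightarrow> ('a \<Rightarrow> 'a \<Rightarrow> bool) \<Rightarrow> (nat \<Rightarrow> 'a) \<Rightarrow> (nat \<Rightarrow> 'a) \<Rightarrow> bool" where
  "direct_power l E1 u v \<longleftrightarrow> (\<forall>i<l. E1 (u i) (v i))"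

definition graph_iso :: "'b set \<Rightarrow> ('b \<Rightarrow> 'b \<Rightarrow> bool) \<Rightarrow> 'c set \<Rightarrow> ('c \<Rightarrow> 'c \<Rightarrow> bool) \<Rightarrow> bool" where
  "graph_iso V E V' E' \<longleftrightarrow> (\<exists>\<phi>. bij_betw \<phi> V V' \<and> (\<forall>x\<in>V. \<forall>y\<in>V. E x y \<longleftrightarrow> E' (\<phi> x) (\<phi> y)))"

definition orbit_graph :: "('a \<Rightarrow> 'a) set \<Rightarrow> 'a \<Rightarrow> 'a \<Rightarrow> 'a \<Rightarrow> 'a \<Rightarrow> bool" where
  "orbit_graph H a b x y \<longleftrightarrow> (\<exists>m\<in>H. {x, y} = {m a, m b})"

end

theory Submission
  imports Defs
begin

locale P34 =
  fixes D :: "'a set" and l :: nat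
    and G M :: "((nat \<Rightarrow> 'a) \<Rightarrow> (nat \<Rightarrow> 'a)) set"
    and E :: "(nat \<Rightarrow> 'a) \<Rightarrow> (nat \<Rightarrow> 'a) \<Rightarrow> bool"
  assumes fin: "finite D" and cardD: "card D \<ge> 2" and l2: "l \<ge> 2"
    and sg: "subgroup G (BijGroup (Omega l D))" and GW: "G \<subseteq> Wr l D"
    and mn: "minimal_normal (Omega l D) G M"
    and tr: "transitive_on (Omega l D) M"
    and gr: "graph (Omega l D) E" and conn: "connected_graph (Omega l D) E"
    and aut: "G \<subseteq> automorphisms_of (Omega l D) E"
    and arc: "arc_transitive M E"
    and ni: "normal_inclusion l D M"
begin

abbreviation "Om \<equiv> Omega l D"
abbreviation "Gg \<equiv> (BijGroup Om)\<lparr>carrier := G\<rparr>"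
abbreviation "C j \<equiv> component l D M j"

lemma grpG: "group Gg"
  using sg group_BijGroup subgroup.subgroup_is_group by blast

lemma Mnormal: "M \<lhd> Gg" using mn unfolding minimal_normal_def by blast

lemma Msub: "subgroup M Gg" using Mnormal normal_imp_subgroup by blast

lemma MG: "M \<subseteq> G" using subgroup.subset[OF Msub] by simp

lemma GBij: "G \<subseteq> Bij Om" using subgroup.subset[OF sg] by (simp add: BijGroup_def)

lemma mult_eq: "x \<in> G \<Longrightarrow> y \<in> G \<Longrightarrow> x \<otimes>\<^bsub>Gg\<^esub> y = compose Om x y"
  using GBij by (auto simp: BijGroup_def)

lemma one_eq: "\<one>\<^bsub>Gg\<^esub> = (\<lambda>x\<in>Om. x)"
  by (simp add: BijGroup_def)

lemma Bij_mem: "\<sigma> \<in> Bij Om \<Longrightarrow> \<delta> \<in> Om \<Longrightarrow> \<sigma> \<delta> \<in> Om"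
  by (auto simp: Bij_def bij_betw_def)

lemma G_mem: "\<sigma> \<in> G \<Longrightarrow> \<delta> \<in> Om \<Longrightarrow> \<sigma> \<delta> \<in> Om"
  using GBij Bij_mem by blast

lemma inv_G: "x \<in> G \<Longrightarrow> inv\<^bsub>Gg\<^esub> x \<in> G"
  using group.inv_closed[OF grpG] by fastforce

lemma inv_apply: assumes "x \<in> G" "\<delta> \<in> Om" shows "x ((inv\<^bsub>Gg\<^esub> x) \<delta>) = \<delta>"
proof -
  have "x \<otimes>\<^bsub>Gg\<^esub> inv\<^bsub>Gg\<^esub> x = \<one>\<^bsub>Gg\<^esub>" using group.r_inv[OF grpG] assms by fastforce
  hence "compose Om x (inv\<^bsub>Gg\<^esub> x) = (\<lambda>x\<in>Om. x)" using mult_eq[OF assms(1) inv_G[OF assms(1)]] one_eq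
    by metis
  hence "compose Om x (inv\<^bsub>Gg\<^esub> x) \<delta> = \<delta>" using assms by simp
  thus ?thesis using assms by (simp add: compose_def)
qed

lemma Om_iff: "\<delta> \<in> Om \<longleftrightarrow> (\<forall>j<l. \<delta> j \<in> D) \<and> (\<forall>j. \<not> j < l \<longrightarrow> \<delta> j = undefined)"
  by (auto simp: Omega_def PiE_iff extensional_def)

lemma Om_ext: "x \<in> Om \<Longrightarrow> y \<in> Om \<Longrightarrow> (\<And>j. j < l \<Longrightarrow> x j = y j) \<Longrightarrow> x = y"
  using Om_iff by (metis ext)

lemma lam_Om: "(\<And>j. j < l \<Longrightarrow> f j \<in> D) \<Longrightarrow> (\<lambda>j\<in>{..<l}. f j) \<in> Om"
  by (simp add: Om_iff)

lemma M_char: "\<sigma> \<in> M \<longleftrightarrow> (\<exists>g. wr_elem l D id g \<sigma> \<and> (\<forall>j<l. restrict (g j) D \<in> C j))"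
proof -
  have "M = {\<sigma>. \<exists>g. wr_elem l D id g \<sigma> \<and> (\<forall>j<l. restrict (g j) D \<in> C j)}"
    using ni unfolding normal_inclusion_def by blast
  then show ?thesis by blast
qed

lemma C_bij: assumes "j < l" "c \<in> C j" shows "bij_betw c D D" "c \<in> extensional D"
proof -
  obtain \<sigma> h g where "c = restrict (g j) D" "wr_elem l D h g \<sigma>"
    using assms(2) unfolding component_def by blast
  then show "bij_betw c D D" "c \<in> extensional D" using assms(1) unfolding wr_elem_def by auto
qed

lemma C_mem: "j < l \<Longrightarrow> c \<in> C j \<Longrightarrow> u \<in> D \<Longrightarrow> c u \<in> D"
  using C_bij bij_betwE by metis

lemma M_apply: assumes "\<sigma> \<in> M"
  obtains c where "\<forall>j<l. c j \<in> C j" "\<forall>\<delta>\<in>Om. \<forall>j<l. \<sigma> \<delta> j = c j (\<delta> j)"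
proof -
  obtain g where g: "wr_elem l D id g \<sigma>" "\<forall>j<l. restrict (g j) D \<in> C j"
    using assms M_char by blast
  have "\<forall>\<delta>\<in>Om. \<forall>j<l. \<sigma> \<delta> j = restrict (g j) D (\<delta> j)"
  proof (intro ballI allI impI)
    fix \<delta> j assume a: "\<delta> \<in> Om" "j < l"
    then have "\<delta> j \<in> D" by (simp add: Om_iff)
    moreover have "\<sigma> \<delta> (id j) = g j (\<delta> j)" using g(1) a unfolding wr_elem_def by blast
    ultimately show "\<sigma> \<delta> j = restrict (g j) D (\<delta> j)" by simp
  qed
  then show ?thesis by (rule that[OF g(2)])
qed

lemma prodmap_Bij: assumes "\<And>j. j < l \<Longrightarrow> bij_betw (f j) D D"
  shows "(\<lambda>\<delta>\<in>Om. \<lambda>j\<in>{..<l}. f j (\<delta> j)) \<in> Bij Om"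
proof -
  let ?p = "(\<lambda>\<delta>\<in>Om. \<lambda>j\<in>{..<l}. f j (\<delta> j))"
  have inj: "inj_on ?p Om"
  proof (rule inj_onI)
    fix x y assume xy: "x \<in> Om" "y \<in> Om" "?p x = ?p y"
    show "x = y"
    proof (rule Om_ext[OF xy(1,2)])
      fix j assume j: "j < l"
      have "?p x j = ?p y j" using xy(3) by simp
      then have "f j (x j) = f j (y j)" using xy j by simp
      moreover have "x j \<in> D" "y j \<in> D" using xy(1,2) j Om_iff by blast+
      ultimately show "x j = y j" by (rule inj_onD[OF bij_betw_imp_inj_on[OF assms[OF j]]])
    qed
  qed
  have img: "?p ` Om = Om"
  proof
    show sub: "?p ` Om \<subseteq> Om"
    proof
      fix z assume "z \<in> ?p ` Om"
      then obtain x where x: "x \<in> Om" "z = ?p x" by blast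
      show "z \<in> Om" unfolding x(2) using x(1) assms
        by (simp add: Om_iff) (metis bij_betwE)
    qed
    show "Om \<subseteq> ?p ` Om"
    proof
      fix y assume y: "y \<in> Om"
      let ?x = "\<lambda>j\<in>{..<l}. inv_into D (f j) (y j)"
      have x: "?x \<in> Om" 
        apply (rule lam_Om) using y assms by (metis bij_betw_imp_surj_on inv_into_into Om_iff)
      have "?p ?x = y"
      proof (rule Om_ext)
        show "?p ?x \<in> Om" using x \<open>?p ` Om \<subseteq> Om\<close> by blast
        fix j assume j: "j < l"
        have "?p ?x j = f j (inv_into D (f j) (y j))" using x j by simp
        also have "\<dots> = y j" using assms[OF j] y j Om_iff by (metis bij_betw_inv_into_right)
        finally show "?p ?x j = y j" .
      qed (rule y)
      then have "y = ?p ?x" by (rule sym)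
      then show "y \<in> ?p ` Om" using x by (rule image_eqI)
    qed
  qed
  show ?thesis unfolding Bij_def using inj img by (auto simp: bij_betw_def)
qed

lemma prodmap_M: assumes "\<And>j. j < l \<Longrightarrow> c j \<in> C j"
  shows "(\<lambda>\<delta>\<in>Om. \<lambda>j\<in>{..<l}. c j (\<delta> j)) \<in> M"
proof -
  have b: "\<And>j. j < l \<Longrightarrow> bij_betw (c j) D D" using assms C_bij by blast
  have "wr_elem l D id c (\<lambda>\<delta>\<in>Om. \<lambda>j\<in>{..<l}. c j (\<delta> j))"
    unfolding wr_elem_def using b prodmap_Bij[OF b] by (simp add: bij_betw_id)
  moreover have "\<forall>j<l. restrict (c j) D \<in> C j" using assms C_bij
    by (metis extensional_restrict)
  ultimately show ?thesis using M_char by blast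
qed

lemma one_M: "(\<lambda>x\<in>Om. x) \<in> M"
  using subgroup.one_closed[OF Msub] one_eq by simp

lemma idC: "j < l \<Longrightarrow> restrict (\<lambda>x. x) D \<in> C j"
proof -
  assume j: "j < l"
  have "wr_elem l D id (\<lambda>_ x. x) (\<lambda>x\<in>Om. x)"
    unfolding wr_elem_def using id_Bij[of Om] bij_betw_id[of D] bij_betw_id[of "{..<l}"] by (simp add: id_def)
  then have "\<exists>\<sigma> h g. restrict (\<lambda>x. x) D = restrict (g j) D \<and> \<sigma> \<in> M \<and> wr_elem l D h g \<sigma> \<and> h j = j"
    using one_M by (intro exI[of _ "\<lambda>x\<in>Om. x"] exI[of _ id] exI[of _ "\<lambda>_ x. x"]) simp
  then show ?thesis unfolding component_def by blast
qed

lemma wr_comp: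
  assumes s1: "\<sigma>1 \<in> G" "wr_elem l D h1 g1 \<sigma>1" and s2: "\<sigma>2 \<in> G" "wr_elem l D h2 g2 \<sigma>2"
  shows "wr_elem l D (h1 \<circ> h2) (\<lambda>i. g1 (h2 i) \<circ> g2 i) (\<sigma>1 \<otimes>\<^bsub>Gg\<^esub> \<sigma>2)"
proof -
  have h1: "bij_betw h1 {..<l} {..<l}" and g1: "\<And>i. i < l \<Longrightarrow> bij_betw (g1 i) D D"
    and a1: "\<And>\<delta> i. \<delta> \<in> Om \<Longrightarrow> i < l \<Longrightarrow> \<sigma>1 \<delta> (h1 i) = g1 i (\<delta> i)"
    using s1(2) unfolding wr_elem_def by auto
  have h2: "bij_betw h2 {..<l} {..<l}" and g2: "\<And>i. i < l \<Longrightarrow> bij_betw (g2 i) D D"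
    and a2: "\<And>\<delta> i. \<delta> \<in> Om \<Longrightarrow> i < l \<Longrightarrow> \<sigma>2 \<delta> (h2 i) = g2 i (\<delta> i)"
    using s2(2) unfolding wr_elem_def by auto
  have h2l: "\<And>i. i < l \<Longrightarrow> h2 i < l" using h2 bij_betwE by blast
  have prod: "\<sigma>1 \<otimes>\<^bsub>Gg\<^esub> \<sigma>2 = compose Om \<sigma>1 \<sigma>2" using mult_eq s1(1) s2(1) by blast
  have inG: "\<sigma>1 \<otimes>\<^bsub>Gg\<^esub> \<sigma>2 \<in> G" using monoid.m_closed[OF group.is_monoid[OF grpG]] s1(1) s2(1) by fastforce
  show ?thesis unfolding wr_elem_def
  proof (intro conjI allI impI ballI)
    show "bij_betw (h1 \<circ> h2) {..<l} {..<l}" using h1 h2 bij_betw_trans by blast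
    fix i assume i: "i < l"
    show "bij_betw (g1 (h2 i) \<circ> g2 i) D D" using g1[OF h2l[OF i]] g2[OF i] bij_betw_trans by blast
  next
    show "\<sigma>1 \<otimes>\<^bsub>Gg\<^esub> \<sigma>2 \<in> Bij Om" using inG GBij by blast
  next
    fix \<delta> i assume d: "\<delta> \<in> Om" and i: "i < l"
    have "\<sigma>2 \<delta> \<in> Om" using G_mem[OF s2(1) d] .
    then have "(\<sigma>1 \<otimes>\<^bsub>Gg\<^esub> \<sigma>2) \<delta> ((h1 \<circ> h2) i) = g1 (h2 i) (\<sigma>2 \<delta> (h2 i))"
      using prod d a1[OF _ h2l[OF i]] by (simp add: compose_def)
    also have "\<dots> = (g1 (h2 i) \<circ> g2 i) (\<delta> i)" using a2[OF d i] by simp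
    finally show "(\<sigma>1 \<otimes>\<^bsub>Gg\<^esub> \<sigma>2) \<delta> ((h1 \<circ> h2) i) = (g1 (h2 i) \<circ> g2 i) (\<delta> i)" .
  qed
qed

lemma G_wr: "\<sigma> \<in> G \<Longrightarrow> \<exists>h g. wr_elem l D h g \<sigma>"
  using GW unfolding Wr_def by blast

lemma CT: "\<forall>j<l. \<exists>\<sigma>\<in>G. \<exists>h g. wr_elem l D h g \<sigma> \<and> h j = 0"
proof (rule ccontr)
  define Orb where "Orb = {i. i < l \<and> (\<exists>\<sigma>\<in>G. \<exists>h g. wr_elem l D h g \<sigma> \<and> h i = 0)}"
  assume "\<not> ?thesis"
  then obtain j0 where j0: "j0 < l" "j0 \<notin> Orb" unfolding Orb_def by blast
  have Oclos: "k \<in> Orb" if x: "x \<in> G" "wr_elem l D hx gx x" and k: "k < l" and hk: "hx k \<in> Orb" for x hx gx k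
  proof -
    obtain \<sigma>' h' g' where s: "\<sigma>' \<in> G" "wr_elem l D h' g' \<sigma>'" "h' (hx k) = 0"
      using hk unfolding Orb_def by blast
    have "wr_elem l D (h' \<circ> hx) (\<lambda>i. g' (hx i) \<circ> gx i) (\<sigma>' \<otimes>\<^bsub>Gg\<^esub> x)"
      using wr_comp[OF s(1,2) x] .
    moreover have "\<sigma>' \<otimes>\<^bsub>Gg\<^esub> x \<in> G" using monoid.m_closed[OF group.is_monoid[OF grpG]] s(1) x(1) by fastforce
    ultimately show "k \<in> Orb" unfolding Orb_def using k s(3) by fastforce
  qed
  have oneG: "(\<lambda>x\<in>Om. x) \<in> G" using one_M MG by blast
  have wr1: "wr_elem l D id (\<lambda>_ x. x) (\<lambda>x\<in>Om. x)"
    unfolding wr_elem_def using id_Bij[of Om] bij_betw_id[of D] bij_betw_id[of "{..<l}"] by (simp add: id_def)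
  have l0: "0 < l" using l2 by simp
  have O0: "0 \<in> Orb" unfolding Orb_def using oneG wr1 l0 by fastforce
  define N where "N = {\<sigma> \<in> M. \<forall>i<l. i \<notin> Orb \<longrightarrow> (\<forall>\<delta>\<in>Om. \<sigma> \<delta> i = \<delta> i)}"
  have NM: "N \<subseteq> M" unfolding N_def by blast
  have NG: "N \<subseteq> G" using NM MG by blast
  have subN: "subgroup N Gg"
  proof
    show "N \<subseteq> carrier Gg" using NG by simp
  next
    fix a b assume ab: "a \<in> N" "b \<in> N"
    have "a \<otimes>\<^bsub>Gg\<^esub> b \<in> M" using subgroup.m_closed[OF Msub] ab NM by blast
    moreover have "\<forall>i<l. i \<notin> Orb \<longrightarrow> (\<forall>\<delta>\<in>Om. (a \<otimes>\<^bsub>Gg\<^esub> b) \<delta> i = \<delta> i)"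
    proof (intro allI impI ballI)
      fix i \<delta> assume i: "i < l" "i \<notin> Orb" and d: "\<delta> \<in> Om"
      have bd: "b \<delta> \<in> Om" using G_mem NG ab d by blast
      have abG: "a \<in> G" "b \<in> G" using NG ab by blast+
      have "(a \<otimes>\<^bsub>Gg\<^esub> b) \<delta> = a (b \<delta>)" using mult_eq[OF abG] d by (simp add: compose_def)
      then show "(a \<otimes>\<^bsub>Gg\<^esub> b) \<delta> i = \<delta> i" using ab bd d i unfolding N_def by simp
    qed
    ultimately show "a \<otimes>\<^bsub>Gg\<^esub> b \<in> N" unfolding N_def by blast
  next
    show "\<one>\<^bsub>Gg\<^esub> \<in> N" unfolding N_def using one_M one_eq by simp
  next
    fix a assume a: "a \<in> N"
    have "inv\<^bsub>Gg\<^esub> a \<in> M" using subgroup.m_inv_closed[OF Msub] a NM by blast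
    moreover have "\<forall>i<l. i \<notin> Orb \<longrightarrow> (\<forall>\<delta>\<in>Om. (inv\<^bsub>Gg\<^esub> a) \<delta> i = \<delta> i)"
    proof (intro allI impI ballI)
      fix i \<delta> assume i: "i < l" "i \<notin> Orb" and d: "\<delta> \<in> Om"
      have aG: "a \<in> G" using a NG by blast
      have bd: "(inv\<^bsub>Gg\<^esub> a) \<delta> \<in> Om" using G_mem[OF inv_G[OF aG] d] .
      have "a ((inv\<^bsub>Gg\<^esub> a) \<delta>) = \<delta>" using inv_apply[OF aG d] .
      moreover have "a ((inv\<^bsub>Gg\<^esub> a) \<delta>) i = (inv\<^bsub>Gg\<^esub> a) \<delta> i" using a bd i unfolding N_def by blast
      ultimately show "(inv\<^bsub>Gg\<^esub> a) \<delta> i = \<delta> i" by simp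
    qed
    ultimately show "inv\<^bsub>Gg\<^esub> a \<in> N" unfolding N_def by blast
  qed
  have key: "inv\<^bsub>Gg\<^esub> x \<otimes>\<^bsub>Gg\<^esub> n \<otimes>\<^bsub>Gg\<^esub> x \<in> N" if x: "x \<in> G" and n: "n \<in> N" for x n
  proof -
    obtain hx gx where wx: "wr_elem l D hx gx x" using G_wr[OF x] by blast
    have hb: "bij_betw hx {..<l} {..<l}" and gb: "\<And>i. i < l \<Longrightarrow> bij_betw (gx i) D D"
      and act: "\<And>\<delta> i. \<delta> \<in> Om \<Longrightarrow> i < l \<Longrightarrow> x \<delta> (hx i) = gx i (\<delta> i)"
      using wx unfolding wr_elem_def by auto
    have nG: "n \<in> G" using n NG by blast
    have ixG: "inv\<^bsub>Gg\<^esub> x \<in> G" using inv_G[OF x] .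
    have tM: "inv\<^bsub>Gg\<^esub> x \<otimes>\<^bsub>Gg\<^esub> n \<otimes>\<^bsub>Gg\<^esub> x \<in> M"
    proof -
      have "n \<in> M" using n NM by blast
      then show ?thesis using normal.inv_op_closed1[OF Mnormal, of x n] x by simp
    qed
    have c1: "inv\<^bsub>Gg\<^esub> x \<otimes>\<^bsub>Gg\<^esub> n \<in> G" using monoid.m_closed[OF group.is_monoid[OF grpG]] ixG nG by fastforce
    have "\<forall>k<l. k \<notin> Orb \<longrightarrow> (\<forall>\<delta>\<in>Om. (inv\<^bsub>Gg\<^esub> x \<otimes>\<^bsub>Gg\<^esub> n \<otimes>\<^bsub>Gg\<^esub> x) \<delta> k = \<delta> k)"
    proof (intro allI impI ballI)
      fix k \<delta> assume k: "k < l" "k \<notin> Orb" and d: "\<delta> \<in> Om"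
      have hk: "hx k < l" using hb k bij_betwE by blast
      have hkO: "hx k \<notin> Orb" using Oclos[OF x wx k(1)] k(2) by blast
      have xd: "x \<delta> \<in> Om" using G_mem[OF x d] .
      define z where "z = n (x \<delta>)"
      have z: "z \<in> Om" unfolding z_def using G_mem[OF nG xd] .
      have tz: "(inv\<^bsub>Gg\<^esub> x \<otimes>\<^bsub>Gg\<^esub> n \<otimes>\<^bsub>Gg\<^esub> x) \<delta> = (inv\<^bsub>Gg\<^esub> x) z"
        using mult_eq[OF c1 x] mult_eq[OF ixG nG] d xd unfolding z_def by (simp add: compose_def)
      have zk: "z (hx k) = gx k (\<delta> k)" unfolding z_def using n xd hk hkO act[OF d k(1)] unfolding N_def by simp
      have iz: "(inv\<^bsub>Gg\<^esub> x) z \<in> Om" using G_mem[OF ixG z] .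
      have "x ((inv\<^bsub>Gg\<^esub> x) z) = z" using inv_apply[OF x z] .
      then have "gx k ((inv\<^bsub>Gg\<^esub> x) z k) = gx k (\<delta> k)" using act[OF iz k(1)] zk by simp
      moreover have "(inv\<^bsub>Gg\<^esub> x) z k \<in> D" "\<delta> k \<in> D" using iz d k(1) Om_iff by blast+
      ultimately have "(inv\<^bsub>Gg\<^esub> x) z k = \<delta> k"
        by (rule inj_onD[OF bij_betw_imp_inj_on[OF gb[OF k(1)]]])
      then show "(inv\<^bsub>Gg\<^esub> x \<otimes>\<^bsub>Gg\<^esub> n \<otimes>\<^bsub>Gg\<^esub> x) \<delta> k = \<delta> k" using tz by simp
    qed
    then show ?thesis using tM unfolding N_def by blast
  qed
  have normN: "N \<lhd> Gg"
  proof -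
    have "\<forall>x\<in>carrier Gg. \<forall>h\<in>N. x \<otimes>\<^bsub>Gg\<^esub> h \<otimes>\<^bsub>Gg\<^esub> inv\<^bsub>Gg\<^esub> x \<in> N"
    proof (intro ballI)
      fix x h assume x: "x \<in> carrier Gg" and h: "h \<in> N"
      have xG: "x \<in> G" using x by simp
      have "inv\<^bsub>Gg\<^esub> (inv\<^bsub>Gg\<^esub> x) = x" using group.inv_inv[OF grpG] x by blast
      then show "x \<otimes>\<^bsub>Gg\<^esub> h \<otimes>\<^bsub>Gg\<^esub> inv\<^bsub>Gg\<^esub> x \<in> N" using key[OF inv_G[OF xG] h] by simp
    qed
    then show ?thesis using group.normal_inv_iff[OF grpG] subN by blast
  qed
  have minN: "N = {\<lambda>x\<in>Om. x} \<or> N = M" using mn normN NM unfolding minimal_normal_def by blast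
  obtain \<alpha> where \<alpha>: "\<alpha> \<in> D" using cardD by (metis card.empty ex_in_conv not_numeral_le_zero)
  have "card (D - {\<alpha>}) \<ge> 1" using cardD \<alpha> fin by (simp add: card_Diff_singleton)
  then obtain d where d: "d \<in> D" "d \<noteq> \<alpha>" by (metis DiffE card.empty ex_in_conv insertCI not_one_le_zero)
  let ?a = "\<lambda>i\<in>{..<l}. \<alpha>"
  have a: "?a \<in> Om" using \<alpha> by (intro lam_Om)
  have mex: "\<exists>m\<in>M. m ?a i = d" if i: "i < l" for i
  proof -
    let ?x = "\<lambda>t\<in>{..<l}. if t = i then d else \<alpha>"
    have x: "?x \<in> Om" using \<alpha> d by (intro lam_Om) auto
    obtain m where mm: "m \<in> M" "m ?a = ?x" using tr a x unfolding transitive_on_def by blast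
    have "m ?a i = ?x i" using mm(2) by simp
    also have "\<dots> = d" using i by simp
    finally show ?thesis using mm(1) by blast
  qed
  obtain m1 where m1: "m1 \<in> M" "m1 ?a j0 = d" using mex[OF j0(1)] by blast
  have "?a j0 = \<alpha>" using j0 by simp
  then have "m1 ?a j0 \<noteq> ?a j0" using m1(2) d(2) by simp
  then have "m1 \<notin> N" using j0 a unfolding N_def by blast
  then have NnM: "N \<noteq> M" using m1 by blast
  obtain m0 where m0: "m0 \<in> M" "m0 ?a 0 = d" using mex[OF l0] by blast
  obtain c where c: "\<forall>j<l. c j \<in> C j" "\<forall>\<delta>\<in>Om. \<forall>j<l. m0 \<delta> j = c j (\<delta> j)"
    using M_apply[OF m0(1)] by blast
  let ?c' = "\<lambda>t. if t = 0 then c 0 else restrict (\<lambda>x. x) D"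
  let ?n = "\<lambda>\<delta>\<in>Om. \<lambda>j\<in>{..<l}. ?c' j (\<delta> j)"
  have nM: "?n \<in> M" using c(1) idC l0 by (intro prodmap_M) auto
  have "\<forall>i<l. i \<notin> Orb \<longrightarrow> (\<forall>\<delta>\<in>Om. ?n \<delta> i = \<delta> i)"
  proof (intro allI impI ballI)
    fix i \<delta> assume i: "i < l" "i \<notin> Orb" and dd: "\<delta> \<in> Om"
    have "i \<noteq> 0"
    proof
      assume "i = 0" then show False using i(2) O0 by simp
    qed
    moreover have "\<delta> i \<in> D" using dd i Om_iff by blast
    ultimately show "?n \<delta> i = \<delta> i" using dd i by simp
  qed
  then have nN: "?n \<in> N" using nM unfolding N_def by blast
  have "?n ?a 0 = c 0 (?a 0)" using a l0 by simp
  also have "\<dots> = m0 ?a 0" using c(2) a l0 by simp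
  also have "\<dots> = d" by (rule m0(2))
  finally have n0: "?n ?a 0 = d" .
  have "?n \<noteq> (\<lambda>x\<in>Om. x)"
  proof
    assume "?n = (\<lambda>x\<in>Om. x)"
    then have "?n ?a 0 = ?a 0" using a by simp
    then show False using n0 d(2) l0 by simp
  qed
  then have "N \<noteq> {\<lambda>x\<in>Om. x}" using nN by blast
  then show False using minN NnM by blast
qed

definition Rel :: "'a \<Rightarrow> (nat \<Rightarrow> 'a) \<Rightarrow> nat \<Rightarrow> 'a \<Rightarrow> 'a \<Rightarrow> bool" where
  "Rel \<alpha> \<beta> j u v \<longleftrightarrow> (\<exists>c\<in>C j. u = c \<alpha> \<and> v = c (\<beta> j))"

lemma G_aut: "\<sigma> \<in> G \<Longrightarrow> x \<in> Om \<Longrightarrow> y \<in> Om \<Longrightarrow> E (\<sigma> x) (\<sigma> y) \<longleftrightarrow> E x y"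
  using aut unfolding automorphisms_of_def by blast

lemma E_Om: "E x y \<Longrightarrow> x \<in> Om \<and> y \<in> Om"
  using gr unfolding graph_def by blast

lemma E_sym: "E x y \<Longrightarrow> E y x"
  using gr unfolding graph_def by blast

lemma E1:
  assumes \<alpha>: "\<alpha> \<in> D" and \<beta>: "\<beta> \<in> Om" and Ea: "E (\<lambda>i\<in>{..<l}. \<alpha>) \<beta>"
  shows "E x y \<longleftrightarrow> x \<in> Om \<and> y \<in> Om \<and> (\<forall>j<l. Rel \<alpha> \<beta> j (x j) (y j))"
proof -
  let ?a = "\<lambda>i\<in>{..<l}. \<alpha>"
  have a: "?a \<in> Om" using \<alpha> by (intro lam_Om)
  show ?thesis
  proof
    assume Exy: "E x y"
    then have xy: "x \<in> Om" "y \<in> Om" using E_Om by blast+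
    obtain m where m: "m \<in> M" "m ?a = x" "m \<beta> = y"
      using arc Ea Exy unfolding arc_transitive_def by blast
    obtain c where c: "\<forall>j<l. c j \<in> C j" "\<forall>\<delta>\<in>Om. \<forall>j<l. m \<delta> j = c j (\<delta> j)"
      using M_apply[OF m(1)] by blast
    have "\<forall>j<l. Rel \<alpha> \<beta> j (x j) (y j)"
    proof (intro allI impI)
      fix j assume j: "j < l"
      have "x j = c j \<alpha>" using c(2) a j m(2) by force
      moreover have "y j = c j (\<beta> j)" using c(2) \<beta> j m(3) by force
      ultimately show "Rel \<alpha> \<beta> j (x j) (y j)" unfolding Rel_def using c(1) j by blast
    qed
    then show "x \<in> Om \<and> y \<in> Om \<and> (\<forall>j<l. Rel \<alpha> \<beta> j (x j) (y j))" using xy by blast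
  next
    assume H: "x \<in> Om \<and> y \<in> Om \<and> (\<forall>j<l. Rel \<alpha> \<beta> j (x j) (y j))"
    then have "\<forall>j. \<exists>c. j < l \<longrightarrow> c \<in> C j \<and> x j = c \<alpha> \<and> y j = c (\<beta> j)"
      unfolding Rel_def by blast
    then obtain cf where cf: "\<forall>j. j < l \<longrightarrow> cf j \<in> C j \<and> x j = cf j \<alpha> \<and> y j = cf j (\<beta> j)"
      by (rule choice[THEN exE])
    let ?m = "\<lambda>\<delta>\<in>Om. \<lambda>j\<in>{..<l}. cf j (\<delta> j)"
    have mM: "?m \<in> M" using cf by (intro prodmap_M) blast
    then have mG: "?m \<in> G" using MG by blast
    have "?m ?a = x"
    proof (rule Om_ext)
      show "?m ?a \<in> Om" using G_mem[OF mG a] .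
      show "x \<in> Om" using H by blast
      fix j assume "j < l" then show "?m ?a j = x j" using cf a by simp
    qed
    moreover have "?m \<beta> = y"
    proof (rule Om_ext)
      show "?m \<beta> \<in> Om" using G_mem[OF mG \<beta>] .
      show "y \<in> Om" using H by blast
      fix j assume "j < l" then show "?m \<beta> j = y j" using cf \<beta> by simp
    qed
    moreover have "E (?m ?a) (?m \<beta>)" using G_aut[OF mG a \<beta>] Ea by blast
    ultimately show "E x y" by simp
  qed
qed

lemma Rel_D:
  assumes "j < l" "\<alpha> \<in> D" "\<beta> \<in> Om" "Rel \<alpha> \<beta> j u v" shows "u \<in> D" "v \<in> D"
proof -
  obtain c where c: "c \<in> C j" "u = c \<alpha>" "v = c (\<beta> j)" using assms(4) unfolding Rel_def by blast
  have "\<beta> j \<in> D" using assms(1,3) Om_iff by blast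
  then show "u \<in> D" "v \<in> D" using c C_mem assms(1,2) by auto
qed

lemma Rel_base:
  assumes "j < l" "\<alpha> \<in> D" "\<beta> \<in> Om" shows "Rel \<alpha> \<beta> j \<alpha> (\<beta> j)"
proof -
  have "\<beta> j \<in> D" using assms(1,3) Om_iff by blast
  then show ?thesis unfolding Rel_def using idC[OF assms(1)] assms(2)
    by (intro bexI[of _ "restrict (\<lambda>x. x) D"]) auto
qed

lemma Rel_sym:
  assumes \<alpha>: "\<alpha> \<in> D" and \<beta>: "\<beta> \<in> Om" and Ea: "E (\<lambda>i\<in>{..<l}. \<alpha>) \<beta>"
    and j: "j < l" and R: "Rel \<alpha> \<beta> j u v"
  shows "Rel \<alpha> \<beta> j v u"
proof -
  have uv: "u \<in> D" "v \<in> D" using Rel_D[OF j \<alpha> \<beta> R] by auto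
  let ?x = "\<lambda>i\<in>{..<l}. if i = j then u else \<alpha>"
  let ?y = "\<lambda>i\<in>{..<l}. if i = j then v else \<beta> i"
  have x: "?x \<in> Om" using uv \<alpha> by (intro lam_Om) auto
  have y: "?y \<in> Om" using uv \<beta> Om_iff by (intro lam_Om) auto
  have "\<forall>i<l. Rel \<alpha> \<beta> i (?x i) (?y i)"
    using R Rel_base[OF _ \<alpha> \<beta>] by auto
  then have "E ?x ?y" using E1[OF \<alpha> \<beta> Ea] x y by blast
  then have "E ?y ?x" by (rule E_sym)
  then have "Rel \<alpha> \<beta> j (?y j) (?x j)" using E1[OF \<alpha> \<beta> Ea] j by blast
  then show ?thesis using j by simp
qed


lemma E3:
  assumes \<alpha>: "\<alpha> \<in> D" and \<beta>: "\<beta> \<in> Om" and Ea: "E (\<lambda>i\<in>{..<l}. \<alpha>) \<beta>"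
    and j: "j < l"
  shows "\<exists>f. bij_betw f D D \<and> (\<forall>u\<in>D. \<forall>v\<in>D. Rel \<alpha> \<beta> j u v \<longleftrightarrow> Rel \<alpha> \<beta> 0 (f u) (f v))"
proof -
  let ?a = "\<lambda>i\<in>{..<l}. \<alpha>"
  have a: "?a \<in> Om" using \<alpha> by (intro lam_Om)
  obtain \<sigma> h g where \<sigma>: "\<sigma> \<in> G" "wr_elem l D h g \<sigma>" "h j = 0" using CT j by blast
  have hb: "bij_betw h {..<l} {..<l}" and gb: "\<And>i. i < l \<Longrightarrow> bij_betw (g i) D D"
    and act: "\<And>\<delta> i. \<delta> \<in> Om \<Longrightarrow> i < l \<Longrightarrow> \<sigma> \<delta> (h i) = g i (\<delta> i)"
    using \<sigma>(2) unfolding wr_elem_def by auto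
  have l0: "0 < l" using l2 by simp
  have Es: "E (\<sigma> ?a) (\<sigma> \<beta>)" using G_aut[OF \<sigma>(1) a \<beta>] Ea by blast
  then have RS: "\<forall>k<l. Rel \<alpha> \<beta> k (\<sigma> ?a k) (\<sigma> \<beta> k)" using E1[OF \<alpha> \<beta> Ea] by blast
  have "\<forall>u\<in>D. \<forall>v\<in>D. Rel \<alpha> \<beta> j u v \<longleftrightarrow> Rel \<alpha> \<beta> 0 (g j u) (g j v)"
  proof (intro ballI)
    fix u v assume uv: "u \<in> D" "v \<in> D"
    let ?x = "\<lambda>i\<in>{..<l}. if i = j then u else \<alpha>"
    let ?y = "\<lambda>i\<in>{..<l}. if i = j then v else \<beta> i"
    have x: "?x \<in> Om" using uv \<alpha> by (intro lam_Om) auto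
    have y: "?y \<in> Om" using uv \<beta> Om_iff by (intro lam_Om) auto
    have sx: "\<sigma> ?x \<in> Om" "\<sigma> ?y \<in> Om" using G_mem[OF \<sigma>(1)] x y by auto
    have sx0: "\<sigma> ?x 0 = g j u" "\<sigma> ?y 0 = g j v"
      using act[OF x j] act[OF y j] \<sigma>(3) j by auto
    show "Rel \<alpha> \<beta> j u v \<longleftrightarrow> Rel \<alpha> \<beta> 0 (g j u) (g j v)"
    proof
      assume R: "Rel \<alpha> \<beta> j u v"
      have "\<forall>i<l. Rel \<alpha> \<beta> i (?x i) (?y i)"
        using R Rel_base[OF _ \<alpha> \<beta>] by auto
      then have "E ?x ?y" using E1[OF \<alpha> \<beta> Ea] x y by blast
      then have "E (\<sigma> ?x) (\<sigma> ?y)" using G_aut[OF \<sigma>(1) x y] by blast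
      then have "Rel \<alpha> \<beta> 0 (\<sigma> ?x 0) (\<sigma> ?y 0)" using E1[OF \<alpha> \<beta> Ea] l0 by blast
      then show "Rel \<alpha> \<beta> 0 (g j u) (g j v)" using sx0 by simp
    next
      assume R: "Rel \<alpha> \<beta> 0 (g j u) (g j v)"
      have "\<forall>k<l. Rel \<alpha> \<beta> k (\<sigma> ?x k) (\<sigma> ?y k)"
      proof (intro allI impI)
        fix k assume k: "k < l"
        then have "k \<in> h ` {..<l}" using hb unfolding bij_betw_def by simp
        then obtain i where i: "i < l" "h i = k" by auto
        show "Rel \<alpha> \<beta> k (\<sigma> ?x k) (\<sigma> ?y k)"
        proof (cases "i = j")
          case True
          then show ?thesis using R sx0 i \<sigma>(3) by simp
        next
          case False
          have "\<sigma> ?x k = \<sigma> ?a k" using act[OF x i(1)] act[OF a i(1)] i False by simp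
          moreover have "\<sigma> ?y k = \<sigma> \<beta> k" using act[OF y i(1)] act[OF \<beta> i(1)] i False by simp
          ultimately show ?thesis using RS k by simp
        qed
      qed
      then have "E (\<sigma> ?x) (\<sigma> ?y)" using E1[OF \<alpha> \<beta> Ea] sx by blast
      then have "E ?x ?y" using G_aut[OF \<sigma>(1) x y] by blast
      then have "Rel \<alpha> \<beta> j (?x j) (?y j)" using E1[OF \<alpha> \<beta> Ea] j by blast
      then show "Rel \<alpha> \<beta> j u v" using j by simp
    qed
  qed
  then show ?thesis using gb[OF j] by blast
qed

lemma orbit_Rel:
  assumes \<alpha>: "\<alpha> \<in> D" and \<beta>: "\<beta> \<in> Om" and Ea: "E (\<lambda>i\<in>{..<l}. \<alpha>) \<beta>"
  shows "orbit_graph (C 0) \<alpha> (\<beta> 0) u v \<longleftrightarrow> Rel \<alpha> \<beta> 0 u v"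
proof
  have l0: "0 < l" using l2 by simp
  assume "orbit_graph (C 0) \<alpha> (\<beta> 0) u v"
  then obtain c where c: "c \<in> C 0" "{u, v} = {c \<alpha>, c (\<beta> 0)}" unfolding orbit_graph_def by blast
  then have "(u = c \<alpha> \<and> v = c (\<beta> 0)) \<or> (u = c (\<beta> 0) \<and> v = c \<alpha>)" by (simp add: doubleton_eq_iff)
  then show "Rel \<alpha> \<beta> 0 u v"
  proof
    assume "u = c \<alpha> \<and> v = c (\<beta> 0)" then show ?thesis unfolding Rel_def using c(1) by blast
  next
    assume "u = c (\<beta> 0) \<and> v = c \<alpha>"
    then have "Rel \<alpha> \<beta> 0 v u" unfolding Rel_def using c(1) by blast
    then show ?thesis using Rel_sym[OF \<alpha> \<beta> Ea l0] by blast
  qed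
next
  assume "Rel \<alpha> \<beta> 0 u v"
  then obtain c where "c \<in> C 0" "u = c \<alpha>" "v = c (\<beta> 0)" unfolding Rel_def by blast
  then show "orbit_graph (C 0) \<alpha> (\<beta> 0) u v" unfolding orbit_graph_def by blast
qed

lemma iso_part:
  assumes \<alpha>: "\<alpha> \<in> D" and \<beta>: "\<beta> \<in> Om" and Ea: "E (\<lambda>i\<in>{..<l}. \<alpha>) \<beta>"
  shows "graph_iso Om E Om (direct_power l (orbit_graph (C 0) \<alpha> (\<beta> 0)))"
proof -
  define F where "F j = (SOME f. bij_betw f D D \<and> (\<forall>u\<in>D. \<forall>v\<in>D. Rel \<alpha> \<beta> j u v \<longleftrightarrow> Rel \<alpha> \<beta> 0 (f u) (f v)))" for j
  have F: "bij_betw (F j) D D \<and> (\<forall>u\<in>D. \<forall>v\<in>D. Rel \<alpha> \<beta> j u v \<longleftrightarrow> Rel \<alpha> \<beta> 0 (F j u) (F j v))" if j: "j < l" for j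
    unfolding F_def using someI_ex[OF E3[OF \<alpha> \<beta> Ea j]] .
  let ?\<phi> = "\<lambda>x\<in>Om. \<lambda>j\<in>{..<l}. F j (x j)"
  have "?\<phi> \<in> Bij Om" using F by (intro prodmap_Bij) blast
  then have bij: "bij_betw ?\<phi> Om Om" unfolding Bij_def by blast
  have "\<forall>x\<in>Om. \<forall>y\<in>Om. E x y \<longleftrightarrow> direct_power l (orbit_graph (C 0) \<alpha> (\<beta> 0)) (?\<phi> x) (?\<phi> y)"
  proof (intro ballI)
    fix x y assume x: "x \<in> Om" and y: "y \<in> Om"
    have "E x y \<longleftrightarrow> (\<forall>j<l. Rel \<alpha> \<beta> j (x j) (y j))" using E1[OF \<alpha> \<beta> Ea] x y by blast
    also have "\<dots> \<longleftrightarrow> (\<forall>j<l. Rel \<alpha> \<beta> 0 (F j (x j)) (F j (y j)))"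
    proof -
      have "\<And>j. j < l \<Longrightarrow> Rel \<alpha> \<beta> j (x j) (y j) \<longleftrightarrow> Rel \<alpha> \<beta> 0 (F j (x j)) (F j (y j))"
        using F x y Om_iff by blast
      then show ?thesis by blast
    qed
    also have "\<dots> \<longleftrightarrow> (\<forall>j<l. orbit_graph (C 0) \<alpha> (\<beta> 0) (?\<phi> x j) (?\<phi> y j))"
      using orbit_Rel[OF \<alpha> \<beta> Ea] x y by simp
    also have "\<dots> \<longleftrightarrow> direct_power l (orbit_graph (C 0) \<alpha> (\<beta> 0)) (?\<phi> x) (?\<phi> y)"
      unfolding direct_power_def ..
    finally show "E x y \<longleftrightarrow> direct_power l (orbit_graph (C 0) \<alpha> (\<beta> 0)) (?\<phi> x) (?\<phi> y)" .
  qed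
  then show ?thesis unfolding graph_iso_def using bij by blast
qed

lemma not_two_arc: "\<not> two_arc_transitive G E"
proof
  assume T: "two_arc_transitive G E"
  have l0: "0 < l" and l1: "1 < l" using l2 by auto
  obtain \<alpha> where \<alpha>: "\<alpha> \<in> D" using cardD by (metis card.empty ex_in_conv not_numeral_le_zero)
  have "card (D - {\<alpha>}) \<ge> 1" using cardD \<alpha> fin by (simp add: card_Diff_singleton)
  then obtain d where d: "d \<in> D" "d \<noteq> \<alpha>" by (metis DiffE card.empty ex_in_conv insertCI not_one_le_zero)
  let ?a = "\<lambda>i\<in>{..<l}. \<alpha>"
  have a: "?a \<in> Om" using \<alpha> by (intro lam_Om)
  let ?z1 = "\<lambda>i\<in>{..<l}. if i = 0 then d else \<alpha>"
  let ?z2 = "\<lambda>i\<in>{..<l}. if i = 1 then d else \<alpha>"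
  have z1: "?z1 \<in> Om" and z2: "?z2 \<in> Om" using \<alpha> d by (auto intro!: lam_Om)
  have z1a: "?z1 \<noteq> ?a" and z2a: "?z2 \<noteq> ?a" and z12: "?z1 \<noteq> ?z2"
  proof -
    have "?z1 0 = d" "?a 0 = \<alpha>" "?z2 0 = \<alpha>" "?z2 1 = d" "?a 1 = \<alpha>" using l0 l1 by auto
    then show "?z1 \<noteq> ?a" "?z2 \<noteq> ?a" "?z1 \<noteq> ?z2" using d(2) by metis+
  qed
  have "E\<^sup>*\<^sup>* ?a ?z1" using conn a z1 unfolding connected_graph_def by blast
  then obtain \<beta> where Ea: "E ?a \<beta>"
    by (rule converse_rtranclpE) (use z1a in auto)
  then have \<beta>: "\<beta> \<in> Om" using E_Om by blast
  obtain z where z: "z \<in> Om" "z \<noteq> ?a" "z \<noteq> \<beta>"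
    using z1 z2 z1a z2a z12 by metis
  have P1: "\<exists>p\<in>D. \<exists>u\<in>D. \<exists>v\<in>D. u \<noteq> v \<and> Rel \<alpha> \<beta> 0 p u \<and> Rel \<alpha> \<beta> 0 p v"
  proof (rule ccontr)
    assume "\<not> ?thesis"
    then have func0: "\<And>p u v. p \<in> D \<Longrightarrow> u \<in> D \<Longrightarrow> v \<in> D \<Longrightarrow> Rel \<alpha> \<beta> 0 p u \<Longrightarrow> Rel \<alpha> \<beta> 0 p v \<Longrightarrow> u = v"
      by blast
    have func: "y = y'" if e: "E x y" "E x y'" for x y y'
    proof -
      have xy: "x \<in> Om" "y \<in> Om" "y' \<in> Om" using e E_Om by blast+
      show ?thesis
      proof (rule Om_ext[OF xy(2,3)])
        fix j assume j: "j < l"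
        obtain f where f: "bij_betw f D D" "\<forall>u\<in>D. \<forall>v\<in>D. Rel \<alpha> \<beta> j u v \<longleftrightarrow> Rel \<alpha> \<beta> 0 (f u) (f v)"
          using E3[OF \<alpha> \<beta> Ea j] by blast
        have D3: "x j \<in> D" "y j \<in> D" "y' j \<in> D" using xy j Om_iff by blast+
        have "Rel \<alpha> \<beta> j (x j) (y j)" "Rel \<alpha> \<beta> j (x j) (y' j)" using e E1[OF \<alpha> \<beta> Ea] j by blast+
        then have "Rel \<alpha> \<beta> 0 (f (x j)) (f (y j))" "Rel \<alpha> \<beta> 0 (f (x j)) (f (y' j))" using f(2) D3 by blast+
        moreover have "f (x j) \<in> D" "f (y j) \<in> D" "f (y' j) \<in> D" using f(1) D3 bij_betwE by blast+
        ultimately have "f (y j) = f (y' j)" using func0 by blast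
        then show "y j = y' j" using inj_onD[OF bij_betw_imp_inj_on[OF f(1)]] D3 by blast
      qed
    qed
    have "w \<in> {?a, \<beta>}" if "E\<^sup>*\<^sup>* ?a w" for w
      using that
    proof (induction rule: rtranclp_induct)
      case base then show ?case by simp
    next
      case (step w w')
      show ?case
      proof (cases "w = ?a")
        case True then show ?thesis using func[OF Ea] step(2) by blast
      next
        case False
        then have "w = \<beta>" using step(3) by blast
        then show ?thesis using func[OF E_sym[OF Ea]] step(2) by blast
      qed
    qed
    moreover have "E\<^sup>*\<^sup>* ?a z" using conn a z(1) unfolding connected_graph_def by blast
    ultimately show False using z by blast
  qed
  have P2: "\<exists>p\<in>D. \<exists>u\<in>D. \<exists>v\<in>D. u \<noteq> v \<and> Rel \<alpha> \<beta> j p u \<and> Rel \<alpha> \<beta> j p v" if j: "j < l" for j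
  proof -
    obtain p0 u0 v0 where P: "p0 \<in> D" "u0 \<in> D" "v0 \<in> D" "u0 \<noteq> v0" "Rel \<alpha> \<beta> 0 p0 u0" "Rel \<alpha> \<beta> 0 p0 v0"
      using P1 by blast
    obtain f where f: "bij_betw f D D" "\<forall>u\<in>D. \<forall>v\<in>D. Rel \<alpha> \<beta> j u v \<longleftrightarrow> Rel \<alpha> \<beta> 0 (f u) (f v)"
      using E3[OF \<alpha> \<beta> Ea j] by blast
    let ?g = "inv_into D f"
    have gD: "\<And>t. t \<in> D \<Longrightarrow> ?g t \<in> D" and fg: "\<And>t. t \<in> D \<Longrightarrow> f (?g t) = t"
      using f(1) by (metis bij_betwE bij_betw_inv_into, metis bij_betw_inv_into_right)
    have "?g u0 \<noteq> ?g v0" using fg P(2,3,4) by metis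
    moreover have "Rel \<alpha> \<beta> j (?g p0) (?g u0)" "Rel \<alpha> \<beta> j (?g p0) (?g v0)"
      using f(2) gD fg P by auto
    ultimately show ?thesis using gD P by blast
  qed
  then have "\<forall>j. \<exists>t. j < l \<longrightarrow> fst t \<in> D \<and> fst (snd t) \<in> D \<and> snd (snd t) \<in> D \<and> fst (snd t) \<noteq> snd (snd t)
      \<and> Rel \<alpha> \<beta> j (fst t) (fst (snd t)) \<and> Rel \<alpha> \<beta> j (fst t) (snd (snd t))"
    by fastforce
  then obtain t where t: "\<forall>j. j < l \<longrightarrow> fst (t j) \<in> D \<and> fst (snd (t j)) \<in> D \<and> snd (snd (t j)) \<in> D \<and> fst (snd (t j)) \<noteq> snd (snd (t j))
      \<and> Rel \<alpha> \<beta> j (fst (t j)) (fst (snd (t j))) \<and> Rel \<alpha> \<beta> j (fst (t j)) (snd (snd (t j)))"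
    by (rule choice[THEN exE])
  define P where "P j = fst (t j)" for j
  define U where "U j = fst (snd (t j))" for j
  define V where "V j = snd (snd (t j))" for j
  have PUV: "\<And>j. j < l \<Longrightarrow> P j \<in> D \<and> U j \<in> D \<and> V j \<in> D \<and> U j \<noteq> V j \<and> Rel \<alpha> \<beta> j (P j) (U j) \<and> Rel \<alpha> \<beta> j (P j) (V j)"
    using t unfolding P_def U_def V_def by blast
  let ?w1 = "\<lambda>j\<in>{..<l}. P j"
  let ?w0 = "\<lambda>j\<in>{..<l}. U j"
  let ?w2 = "\<lambda>j\<in>{..<l}. V j"
  let ?v2 = "\<lambda>j\<in>{..<l}. if j = 0 then V j else U j"
  have w: "?w1 \<in> Om" "?w0 \<in> Om" "?w2 \<in> Om" "?v2 \<in> Om" using PUV by (auto intro!: lam_Om)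
  have E10: "E ?w1 ?w0" using E1[OF \<alpha> \<beta> Ea] w PUV by simp
  have E12: "E ?w1 ?w2" using E1[OF \<alpha> \<beta> Ea] w PUV by simp
  have E1v: "E ?w1 ?v2" using E1[OF \<alpha> \<beta> Ea] w PUV by simp
  have E01: "E ?w0 ?w1" using E_sym[OF E10] .
  have n02: "?w0 \<noteq> ?w2" and n0v: "?w0 \<noteq> ?v2"
  proof -
    have "?w0 0 = U 0" "?w2 0 = V 0" "?v2 0 = V 0" "U 0 \<noteq> V 0" using l0 PUV by auto
    then show "?w0 \<noteq> ?w2" "?w0 \<noteq> ?v2" by metis+
  qed
  obtain \<sigma> where \<sigma>: "\<sigma> \<in> G" "\<sigma> ?w0 = ?w0" "\<sigma> ?w1 = ?w1" "\<sigma> ?v2 = ?w2"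
    using T E01 E1v n0v E12 n02 unfolding two_arc_transitive_def by blast
  obtain h g where wr: "wr_elem l D h g \<sigma>" using GW \<sigma>(1) unfolding Wr_def by blast
  have hb: "bij_betw h {..<l} {..<l}"
    and act: "\<And>\<delta> i. \<delta> \<in> Om \<Longrightarrow> i < l \<Longrightarrow> \<sigma> \<delta> (h i) = g i (\<delta> i)"
    using wr unfolding wr_elem_def by auto
  have h1: "h 1 < l" using hb l1 bij_betwE by blast
  have "\<sigma> ?w0 (h 1) = g 1 (U 1)" using act[OF w(2) l1] l1 by simp
  moreover have "\<sigma> ?v2 (h 1) = g 1 (U 1)" using act[OF w(4) l1] l1 by simp
  ultimately have "?w0 (h 1) = ?w2 (h 1)" using \<sigma> by simp
  then have "U (h 1) = V (h 1)" using h1 by simp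
  then show False using PUV[OF h1] by blast
qed

end

theorem proposition3p4:
  fixes D :: "'a set" and l :: nat
    and G M :: "((nat \<Rightarrow> 'a) \<Rightarrow> (nat \<Rightarrow> 'a)) set"
    and E :: "(nat \<Rightarrow> 'a) \<Rightarrow> (nat \<Rightarrow> 'a) \<Rightarrow> bool"
  assumes "finite D" and "card D \<ge> 2" and "l \<ge> 2"
    and "subgroup G (BijGroup (Omega l D))" and "G \<subseteq> Wr l D"
    and "minimal_normal (Omega l D) G M"
    and "transitive_on (Omega l D) M"
    and "graph (Omega l D) E" and "connected_graph (Omega l D) E"
    and "G \<subseteq> automorphisms_of (Omega l D) E"
    and "arc_transitive M E"
    and "normal_inclusion l D M"
  shows "(\<forall>\<alpha> \<beta>. \<alpha> \<in> D \<and> \<beta> \<in> Omega l D \<and> E (\<lambda>i\<in>{..<l}. \<alpha>) \<beta> \<longrightarrow>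
            graph_iso (Omega l D) E (Omega l D)
              (direct_power l (orbit_graph (component l D M 0) \<alpha> (\<beta> 0))))
         \<and> \<not> two_arc_transitive G E"
proof -
  interpret P34 D l G M E using assms by (simp add: P34_def)
  show ?thesis using iso_part not_two_arc by blast
qed

end
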